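(* Let $\lambda>0$ and let $D$ be an edge-minimal $\lambda$-counterexample. Let $S \subseteq V(D)$ be a set of vertices such that $N_1^+(S)$ is non-empty. Then $d_2^+(S) < \lambda\, d_1^+(S)$.
   Context: All digraphs are finite oriented simple graphs: no loops, no multiple edges, and no directed 2-cycles. For vertices $u,v$ of a digraph $D$, $d(u,v)$ is the length of a shortest directed path from $u$ to $v$, with the convention that $d(v,v)$ is the length of a shortest directed cycle through $v$ (not $0$). $N_k^+(v)$ is the set of vertices $u$ with $d(v,u)=k$, and $d_k^+(v)=|N_k^+(v)|$. For a set of vertices $S$, $N_k^+(S)$ is the set of vertices $u$ with $\min_{s\in S} d(s,u)=k$ (so $S$ may intersect $N_k^+(S)$), and $d_k^+(S)=|N_k^+(S)|$. A digraph $D$ is a $\lambda$-counterexample if $d_2^+(v) < \lambda d_1^+(v)$ for every vertex $v$ of $D$. It is an edge-minimal $\lambda$-counterexample if no digraph obtained from $D$ by deleting one or more edges (keeping all vertices) is a $\lambda$-counterexample. *)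

theory Defs
  imports Complex_Main
begin

definition digraph :: "'a set \<Rightarrow> ('a \<times> 'a) set \<Rightarrow> bool" where
  "digraph V E \<longleftrightarrow> finite V \<and> E \<subseteq> V \<times> V \<and> (\<forall>v. (v, v) \<notin> E)
     \<and> (\<forall>u v. (u, v) \<in> E \<longrightarrow> (v, u) \<notin> E)"

text \<open>For u = w this is the length of a shortest
  directed cycle through u.\<close>
definition dist_is :: "('a \<times> 'a) set \<Rightarrow> 'a \<Rightarrow> 'a \<Rightarrow> nat \<Rightarrow> bool" where
  "dist_is E u w k \<longleftrightarrow> 0 < k \<and> (u, w) \<in> E ^^ k \<and> (\<forall>j. 0 < j \<and> j < k \<longrightarrow> (u, w) \<notin> E ^^ j)"

definition outN :: "('a \<times> 'a) set \<Rightarrow> nat \<Rightarrow> 'a \<Rightarrow> 'a set" where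
  "outN E k v = {u. dist_is E v u k}"

text \<open>N_k^+(S): vertices u with min over s in S of d(s,u) equal to k\<close>
definition outNS :: "('a \<times> 'a) set \<Rightarrow> nat \<Rightarrow> 'a set \<Rightarrow> 'a set" where
  "outNS E k S = {u. (\<exists>s\<in>S. dist_is E s u k) \<and> (\<forall>s\<in>S. \<forall>j. j < k \<longrightarrow> \<not> dist_is E s u j)}"

definition counterexample :: "real \<Rightarrow> 'a set \<Rightarrow> ('a \<times> 'a) set \<Rightarrow> bool" where
  "counterexample lam V E \<longleftrightarrow> digraph V E \<and>
     (\<forall>v\<in>V. real (card (outN E 2 v)) < lam * real (card (outN E 1 v)))"

definition edge_minimal_counterexample :: "real \<Rightarrow> 'a set \<Rightarrow> ('a \<times> 'a) set \<Rightarrow> bool" where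
  "edge_minimal_counterexample lam V E \<longleftrightarrow> counterexample lam V E \<and>
     (\<forall>E'. E' \<subset> E \<longrightarrow> \<not> counterexample lam V E')"

end

theory Submission
  imports Defs
begin

lemma dist0: "\<not> dist_is E u w 0" by (simp add: dist_is_def)

lemma dist1: "dist_is E u w 1 \<longleftrightarrow> (u, w) \<in> E"
  by (auto simp: dist_is_def)

lemma dist1': "dist_is E u w (Suc 0) \<longleftrightarrow> (u, w) \<in> E"
  using dist1 by simp

lemma dist2: "dist_is E u w 2 \<longleftrightarrow> (u, w) \<in> E O E \<and> (u, w) \<notin> E"
proof -
  have e2: "E ^^ 2 = E O E" by (simp add: numeral_2_eq_2)
  have "(\<forall>j. 0 < j \<and> j < (2::nat) \<longrightarrow> (u, w) \<notin> E ^^ j) \<longleftrightarrow> (u,w) \<notin> E"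
  proof
    assume "\<forall>j. 0 < j \<and> j < (2::nat) \<longrightarrow> (u, w) \<notin> E ^^ j"
    then have "(u,w) \<notin> E ^^ 1" by auto
    then show "(u,w) \<notin> E" by simp
  next
    assume "(u,w) \<notin> E"
    then show "\<forall>j. 0 < j \<and> j < (2::nat) \<longrightarrow> (u, w) \<notin> E ^^ j"
      by (auto simp: less_2_cases_iff)
  qed
  then show ?thesis by (simp add: dist_is_def e2)
qed

lemma outN1: "outN E 1 v = E `` {v}" by (auto simp: outN_def dist1 dist1')
lemma outN1': "outN E (Suc 0) v = E `` {v}" using outN1 by simp
lemma outN2: "outN E 2 v = E `` (E `` {v}) - E `` {v}"
  by (auto simp: outN_def dist2)
lemma outNS1: "outNS E 1 S = E `` S" by (auto simp: outNS_def dist1 dist1' dist0)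
lemma outNS1': "outNS E (Suc 0) S = E `` S" using outNS1 by simp
lemma outNS2: "outNS E 2 S = E `` (E `` S) - E `` S"
proof -
  have "(\<forall>s\<in>S. \<forall>j. j < (2::nat) \<longrightarrow> \<not> dist_is E s u j) \<longleftrightarrow> (\<forall>s\<in>S. (s,u) \<notin> E)" for u
    by (auto simp: less_2_cases_iff dist0 dist1 dist1')
  then show ?thesis by (auto simp: outNS_def dist2)
qed

lemma cex_img:
  assumes "counterexample lam V E"
  shows "finite V" "E \<subseteq> V \<times> V"
    "\<And>v. v \<in> V \<Longrightarrow> real (card (E `` (E `` {v}) - E `` {v})) < lam * real (card (E `` {v}))"
  using assms by (auto simp: counterexample_def digraph_def outN1 outN1' outN2)

lemma img_fin: "finite V \<Longrightarrow> E \<subseteq> V \<times> V \<Longrightarrow> finite (E `` X)"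
  by (rule finite_subset[of _ V]) auto

lemma expansion:
  assumes em: "edge_minimal_counterexample lam V E" and w: "w \<in> V"
    and B: "B \<subset> E `` {w}"
  shows "real (card (E `` B - B)) \<ge> lam * real (card B)"
proof (rule ccontr)
  assume neg: "\<not> ?thesis"
  have ce: "counterexample lam V E" using em by (simp add: edge_minimal_counterexample_def)
  note c = cex_img[OF ce]
  define E' where "E' = E - {(w,x) | x. x \<in> E `` {w} - B}"
  have sub: "E' \<subset> E" unfolding E'_def using B by auto
  have "counterexample lam V E'"
  proof -
    have dg: "digraph V E'" using ce sub unfolding counterexample_def digraph_def by blast
    have "real (card (E' `` (E' `` {v}) - E' `` {v})) < lam * real (card (E' `` {v}))"
      if v: "v \<in> V" for v
    proof (cases "v = w")
      case True
      have eB: "E' `` {w} = B" unfolding E'_def using B by auto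
      moreover have "E' `` B - B \<subseteq> E `` B - B" unfolding E'_def by auto
      moreover have "finite (E `` B - B)" using img_fin[OF c(1,2)] by auto
      ultimately have "card (E' `` (E' `` {w}) - E' `` {w}) \<le> card (E `` B - B)"
        by (simp add: card_mono)
      then show ?thesis using neg True eB by simp
    next
      case False
      have eq: "E' `` {v} = E `` {v}" unfolding E'_def using False by auto
      have "E' `` (E' `` {v}) - E' `` {v} \<subseteq> E `` (E `` {v}) - E `` {v}"
        using eq sub by auto
      then have "card (E' `` (E' `` {v}) - E' `` {v}) \<le> card (E `` (E `` {v}) - E `` {v})"
        using img_fin[OF c(1,2)] by (meson card_mono finite_Diff)
      then show ?thesis using c(3)[OF v] eq by simp
    qed
    then show ?thesis using dg by (simp add: counterexample_def outN1 outN1' outN2)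
  qed
  then show False using em sub by (auto simp: edge_minimal_counterexample_def)
qed

lemma submod:
  assumes fin: "finite (E `` A1 - A1)" "finite (E `` A2 - A2)"
  shows "card (E `` (A1 \<union> A2) - (A1 \<union> A2)) + card (E `` (A1 \<inter> A2) - (A1 \<inter> A2))
     \<le> card (E `` A1 - A1) + card (E `` A2 - A2)"
proof -
  let ?X1 = "E `` A1 - A1" and ?X2 = "E `` A2 - A2"
  let ?P = "E `` (A1 \<union> A2) - (A1 \<union> A2)" and ?Q = "E `` (A1 \<inter> A2) - (A1 \<inter> A2)"
  have P: "?P \<subseteq> ?X1 \<union> ?X2" by auto
  have Q: "?Q \<subseteq> ?X1 \<union> ?X2" by auto
  have PQ: "?P \<inter> ?Q \<subseteq> ?X1 \<inter> ?X2" by auto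
  have fu: "finite (?X1 \<union> ?X2)" using fin by auto
  have fP: "finite ?P" using P fu finite_subset by blast
  have fQ: "finite ?Q" using Q fu finite_subset by blast
  have "card ?P + card ?Q = card (?P \<union> ?Q) + card (?P \<inter> ?Q)"
    using card_Un_Int[OF fP fQ] by simp
  also have "\<dots> \<le> card (?X1 \<union> ?X2) + card (?X1 \<inter> ?X2)"
    using fu P Q PQ by (intro add_mono card_mono) auto
  also have "\<dots> = card ?X1 + card ?X2" using card_Un_Int[of ?X1 ?X2] fin by simp
  finally show ?thesis .
qed

lemma main_ind:
  assumes em: "edge_minimal_counterexample lam V E"
  shows "finite S \<Longrightarrow> S \<subseteq> V \<Longrightarrow> E `` S = {} \<or>
     real (card (E `` (E `` S) - E `` S)) < lam * real (card (E `` S))"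
proof (induction S rule: finite_induct)
  case empty then show ?case by simp
next
  case (insert s S)
  have ce: "counterexample lam V E" using em by (simp add: edge_minimal_counterexample_def)
  note c = cex_img[OF ce]
  have sV: "s \<in> V" and SV: "S \<subseteq> V" using insert by auto
  let ?A1 = "E `` S" and ?A2 = "E `` {s}"
  have T: "E `` insert s S = ?A1 \<union> ?A2" by auto
  have h2: "real (card (E `` ?A2 - ?A2)) < lam * real (card ?A2)" using c(3)[OF sV] .
  show ?case
  proof (cases "?A1 = {}")
    case True then show ?thesis using h2 T by simp
  next
    case False
    then have h1: "real (card (E `` ?A1 - ?A1)) < lam * real (card ?A1)" using insert SV by blast
    show ?thesis
    proof (cases "?A2 \<subseteq> ?A1")
      case True
      then have "E `` insert s S = ?A1" using T by auto
      then show ?thesis using h1 by simp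
    next
      case nsub: False
      have Bsub: "?A1 \<inter> ?A2 \<subset> ?A2" using nsub by auto
      have ex: "real (card (E `` (?A1 \<inter> ?A2) - (?A1 \<inter> ?A2))) \<ge> lam * real (card (?A1 \<inter> ?A2))"
        using expansion[OF em sV Bsub] .
      have fin: "finite (E `` ?A1 - ?A1)" "finite (E `` ?A2 - ?A2)"
        using img_fin[OF c(1,2)] by auto
      have sm: "real (card (E `` (?A1 \<union> ?A2) - (?A1 \<union> ?A2))) + real (card (E `` (?A1 \<inter> ?A2) - (?A1 \<inter> ?A2)))
          \<le> real (card (E `` ?A1 - ?A1)) + real (card (E `` ?A2 - ?A2))"
        using submod[OF fin] by linarith
      have fA: "finite ?A1" "finite ?A2" using img_fin[OF c(1,2)] by auto
      have cu: "real (card (?A1 \<union> ?A2)) + real (card (?A1 \<inter> ?A2)) = real (card ?A1) + real (card ?A2)"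
        using card_Un_Int[OF fA] by simp
      have "real (card (E `` (?A1 \<union> ?A2) - (?A1 \<union> ?A2))) < lam * real (card (?A1 \<union> ?A2))"
      proof -
        have "lam * real (card (?A1 \<union> ?A2)) = lam * real (card ?A1) + lam * real (card ?A2) - lam * real (card (?A1 \<inter> ?A2))"
          using arg_cong[OF cu, of "\<lambda>x. lam * x"] by (simp add: algebra_simps)
        then show ?thesis using sm ex h1 h2 by linarith
      qed
      then show ?thesis using T by simp
    qed
  qed
qed

theorem lemma1:
  fixes lam :: real and V :: "'a set" and E :: "('a \<times> 'a) set" and S :: "'a set"
  assumes "lam > 0"
    and "edge_minimal_counterexample lam V E"
    and "S \<subseteq> V"
    and "outNS E 1 S \<noteq> {}"
  shows "real (card (outNS E 2 S)) < lam * real (card (outNS E 1 S))"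
proof -
  have ce: "counterexample lam V E" using assms(2) by (simp add: edge_minimal_counterexample_def)
  have "finite S" using cex_img(1)[OF ce] assms(3) finite_subset by blast
  from main_ind[OF assms(2) this assms(3)] assms(4) show ?thesis
    by (simp add: outNS1 outNS1' outNS2)
qed

end
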